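(* Let $q$ be a prime power, let $r>0$ be an integer and $B(X)\in\mathbb{F}_{q^3}[X]$. Let $\Gamma$ be the set of roots in $\mathbb{F}_{q^3}$ of $X^{q^2}+X^q+X$ and $\Lambda$ the set of roots in $\mathbb{F}_{q^3}$ of $X^{q+1}+X+1$. Then the following are equivalent: (1) $X^rB(X^{q-1})$ permutes $\Gamma$; (2) $\gcd(r,q-1)=1$ and $X^rB(X)^{q-1}$ permutes $\Lambda$; (3) $\gcd(r,q-1)=1$, $B(X)$ has no roots in $\Lambda$, and the rational function $X^rB^{(q)}(-X^{-1}-1)/B(X)$ permutes $\Lambda$.
   Context: For a polynomial or rational function $g$ over $\overline{\mathbb{F}}_q$, $g^{(q)}$ denotes the function obtained from $g$ by raising each of its coefficients to the $q$-th power. A function "permutes" a set $T$ if it maps $T$ bijectively onto $T$. *)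

theory Defs
  imports "HOL-Computational_Algebra.Polynomial"
begin

definition prime_power :: "nat \<Rightarrow> bool" where
  "prime_power q \<longleftrightarrow> (\<exists>p k. prime p \<and> k > 0 \<and> q = p ^ k)"

definition frob_coeffs :: "nat \<Rightarrow> 'a::comm_semiring_1 poly \<Rightarrow> 'a poly" where
  "frob_coeffs q g = map_poly (\<lambda>c. c ^ q) g"

definition Gamma_set :: "nat \<Rightarrow> 'a::comm_ring_1 set" where
  "Gamma_set q = {x. x ^ (q^2) + x ^ q + x = 0}"

definition Lambda_set :: "nat \<Rightarrow> 'a::comm_ring_1 set" where
  "Lambda_set q = {x. x ^ (q+1) + x + 1 = 0}"

end

theory Submission
  imports Defs "HOL-Number_Theory.Residues" "HOL-Computational_Algebra.Primes"
begin

lemma char_info: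
  fixes q :: nat
  assumes "prime_power q" "card (UNIV::'a::{field,finite} set) = q^3"
  shows "prime CHAR('a) \<and> (\<exists>k. q = CHAR('a)^k) \<and> q \<ge> 2"
proof -
  obtain p k where p: "prime p" "k>0" "q = p^k"
    using assms(1) unfolding prime_power_def by blast
  have pos: "CHAR('a) > 0" by (rule finite_imp_CHAR_pos) simp
  have pc: "prime CHAR('a)" using prime_CHAR_semidom[OF pos] .
  have "CHAR('a) dvd p^(k*3)" using CHAR_dvd_CARD[where 'a='a] assms(2) p
    by (simp add: power_mult)
  hence "CHAR('a) dvd p" using pc prime_dvd_power by blast
  hence cp: "CHAR('a) = p" using pc p(1) primes_dvd_imp_eq by blast
  have p2: "p \<ge> 2" using p(1) prime_ge_2_nat by blast
  have "p \<le> p^k" using p2 p(2) by (intro self_le_power) auto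
  hence "q \<ge> 2" using p(3) p2 by linarith
  thus ?thesis using cp pc p by blast
qed

lemma frob_add:
  fixes x y :: "'a::field"
  assumes "prime CHAR('a)" "q = CHAR('a)^k"
  shows "(x+y)^q = x^q + y^q"
  using freshmans_dream'[OF assms] .

lemma frob_neg:
  fixes x :: "'a::field"
  assumes "prime CHAR('a)" "q = CHAR('a)^k"
  shows "(-x)^q = - (x^q)"
proof -
  have "q > 0" using assms prime_gt_0_nat by simp
  have "(x + -x)^q = x^q + (-x)^q" by (rule frob_add[OF assms])
  hence "x^q + (-x)^q = 0" using \<open>q>0\<close> by (simp add: zero_power)
  thus ?thesis by (simp add: eq_neg_iff_add_eq_0 add.commute)
qed

lemma frob_diff:
  fixes x y :: "'a::field"
  assumes "prime CHAR('a)" "q = CHAR('a)^k"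
  shows "(x-y)^q = x^q - y^q"
  using frob_add[OF assms, of x "-y"] frob_neg[OF assms, of y] by simp

lemma frob_poly:
  fixes B :: "'a::field poly"
  assumes "prime CHAR('a)" "q = CHAR('a)^k"
  shows "poly B x ^ q = poly (frob_coeffs q B) (x^q)"
proof -
  have "q > 0" using assms prime_gt_0_nat by simp
  show ?thesis
  proof (induction B rule: pCons_induct)
    case 0
    then show ?case using \<open>q>0\<close> by (simp add: frob_coeffs_def)
  next
    case (pCons a p)
    have "poly (pCons a p) x ^ q = (a + x * poly p x)^q" by simp
    also have "\<dots> = a^q + x^q * poly p x ^ q"
      using frob_add[OF assms] by (simp add: power_mult_distrib)
    also have "\<dots> = poly (frob_coeffs q (pCons a p)) (x^q)"
      using pCons.IH \<open>q>0\<close> by (simp add: frob_coeffs_def map_poly_pCons)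
    finally show ?case .
  qed
qed

lemma fermat_field:
  fixes x :: "'a::{field,finite}"
  assumes "x \<noteq> 0"
  shows "x ^ (card (UNIV::'a set) - 1) = 1"
proof -
  let ?S = "UNIV - {0::'a}"
  have fin: "finite ?S" by simp
  have "prod (\<lambda>y. x*y) ?S = x^card ?S * prod (\<lambda>y. y) ?S"
    by (simp add: prod.distrib)
  moreover have "prod (\<lambda>y. x*y) ?S = prod (\<lambda>y. y) ?S"
  proof -
    have inj: "inj_on ((*) x) ?S" using assms by (auto simp: inj_on_def)
    have im: "(*) x ` ?S = ?S"
    proof
      show "(*) x ` ?S \<subseteq> ?S" using assms by auto
      show "?S \<subseteq> (*) x ` ?S"
      proof
        fix z assume "z \<in> ?S"
        hence "z = x * (z / x)" "z / x \<in> ?S" using assms by auto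
        thus "z \<in> (*) x ` ?S" by blast
      qed
    qed
    have "prod (\<lambda>y. y) ((*) x ` ?S) = prod ((\<lambda>y. y) \<circ> (*) x) ?S"
      by (rule prod.reindex[OF inj])
    thus ?thesis using im by (simp add: comp_def)
  qed
  moreover have "prod (\<lambda>y. y) ?S \<noteq> 0" using fin by (simp add: prod_zero_iff)
  ultimately have "x^card ?S = 1" by simp
  moreover have "card ?S = card (UNIV::'a set) - 1" by (simp add: card_Diff_singleton)
  ultimately show ?thesis by simp
qed

lemma roots_dvd:
  fixes p a :: "'a::field poly"
  assumes "p \<noteq> 0" "card {x. poly p x = 0} = degree p" "a dvd p"
  shows "card {x. poly a x = 0} = degree a"
proof -
  obtain b where pb: "p = a*b" using assms(3) by (auto elim: dvdE)
  have a0: "a \<noteq> 0" "b \<noteq> 0" using assms(1) pb by auto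
  have "{x. poly p x = 0} = {x. poly a x = 0} \<union> {x. poly b x = 0}" using pb by auto
  hence "degree p \<le> card {x. poly a x = 0} + card {x. poly b x = 0}"
    using assms(2) card_Un_le by metis
  moreover have "degree p = degree a + degree b" using pb a0 degree_mult_eq by auto
  moreover have "card {x. poly b x = 0} \<le> degree b" using card_poly_roots_bound a0 by auto
  moreover have "card {x. poly a x = 0} \<le> degree a" using card_poly_roots_bound a0 by auto
  ultimately show ?thesis by linarith
qed

lemma dvd_pow_diff: "(x::'b::comm_ring_1) - y dvd x^e - y^e"
proof (induction e)
  case 0 then show ?case by simp
next
  case (Suc e)
  have "x^Suc e - y^Suc e = x*(x^e - y^e) + (x - y)*y^e" by (simp add: algebra_simps)
  thus ?case using Suc by (simp add: dvd_add)
qed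

lemma degree_Xpow_minus:
  assumes "d > 0"
  shows "degree ([:0,1::'a::field:]^d - [:b:]) = d"
proof -
  have "[:0,1::'a:]^d - [:b:] = [:0,1:]^d + [:-b:]" by simp
  also have "degree \<dots> = degree ([:0,1::'a:]^d)"
    using assms by (intro degree_add_eq_left) (simp add: degree_linear_power[of 0, simplified])
  also have "\<dots> = d" using degree_linear_power[of "0::'a" d] by simp
  finally show ?thesis .
qed

lemma pow_eq_count:
  fixes b :: "'a::{field,finite}"
  assumes "d > 0" "d * e = card (UNIV::'a set) - 1" "b^e = 1" "card (UNIV::'a set) \<ge> 2"
  shows "card {x::'a. x^d = b} = d"
proof -
  define N where "N = card (UNIV::'a set) - 1"
  have N0: "N > 0" using assms(4) N_def by simp
  let ?P = "[:0,1::'a:]^N - [:1:]"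
  have Pdeg: "degree ?P = N" using degree_Xpow_minus[OF N0] .
  hence P0: "?P \<noteq> 0" using N0 by auto
  have "{x. poly ?P x = 0} = UNIV - {0}"
  proof -
    have "poly ?P x = 0 \<longleftrightarrow> x \<noteq> 0" for x
      using fermat_field[of x] N0 by (cases "x = 0") (auto simp: N_def poly_power power_0_left)
    thus ?thesis by auto
  qed
  hence "card {x. poly ?P x = 0} = N" by (simp add: card_Diff_singleton N_def)
  hence Pc: "card {x. poly ?P x = 0} = degree ?P" using Pdeg by simp
  have "([:0,1::'a:]^d) ^ e - [:b:]^e = ?P"
    using assms(2,3) by (simp add: poly_const_pow N_def flip: power_mult)
  hence dv: "[:0,1::'a:]^d - [:b:] dvd ?P" by (metis dvd_pow_diff)
  have "card {x. poly ([:0,1::'a:]^d - [:b:]) x = 0} = d"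
    using roots_dvd[OF P0 Pc dv] degree_Xpow_minus[OF assms(1)] by simp
  moreover have "{x. poly ([:0,1::'a:]^d - [:b:]) x = 0} = {x. x^d = b}"
    by (simp add: poly_power)
  ultimately show ?thesis by simp
qed


lemma coprime_pow_one:
  fixes a :: "'a::field"
  assumes "gcd r m = 1" "r > 0" "a^r = 1" "a^m = 1"
  shows "a = 1"
proof -
  obtain u v where uv: "r * u = m * v + gcd r m" using bezout_nat[of r m] assms(2) by auto
  have "a^(r*u) = 1" using assms(3) by (simp add: power_mult)
  moreover have "a^(m*v + 1) = a" using assms(4) by (simp add: power_mult power_add)
  ultimately show ?thesis using uv assms(1) by simp
qed

theorem lemma3p3:
  fixes q r :: nat and B :: "'a::{field,finite} poly"
  assumes "prime_power q"
    and "card (UNIV :: 'a set) = q ^ 3"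
    and "r > 0"
  shows "(bij_betw (\<lambda>x. x ^ r * poly B (x ^ (q - 1))) (Gamma_set q) (Gamma_set q)
          \<longleftrightarrow> (gcd r (q - 1) = 1 \<and>
               bij_betw (\<lambda>x. x ^ r * (poly B x) ^ (q - 1)) (Lambda_set q) (Lambda_set q)))
       \<and> ((gcd r (q - 1) = 1 \<and>
               bij_betw (\<lambda>x. x ^ r * (poly B x) ^ (q - 1)) (Lambda_set q) (Lambda_set q))
          \<longleftrightarrow> (gcd r (q - 1) = 1 \<and> (\<forall>x\<in>Lambda_set q. poly B x \<noteq> 0) \<and>
               bij_betw (\<lambda>x. x ^ r * poly (frob_coeffs q B) (- inverse x - 1) / poly B x)
                 (Lambda_set q) (Lambda_set q)))"
proof -
  define f where "f = (\<lambda>x::'a. x ^ r * poly B (x ^ (q - 1)))"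
  define g where "g = (\<lambda>x::'a. x ^ r * (poly B x) ^ (q - 1))"
  define h where "h = (\<lambda>x::'a. x ^ r * poly (frob_coeffs q B) (- inverse x - 1) / poly B x)"
  define Gam where "Gam = (Gamma_set q :: 'a set)"
  define Lam where "Lam = (Lambda_set q :: 'a set)"
  obtain k where pc: "prime CHAR('a)" and qk: "q = CHAR('a)^k" and q2: "q \<ge> 2"
    using char_info[OF assms(1,2)] by blast
  obtain m where qm: "q = Suc m" and m1: "m \<ge> 1" using q2 by (cases q) auto
  have card2: "card (UNIV::'a set) \<ge> 2"
  proof -
    have "q^3 \<ge> (2::nat)^3" using q2 power_mono by blast
    thus ?thesis using assms(2) by simp
  qed
  have Nfac: "(q - 1) * (q^2 + q + 1) = card (UNIV::'a set) - 1"
    using assms(2) qm by (simp add: power2_eq_square power3_eq_cube algebra_simps)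
  have finG: "finite Gam" and finL: "finite Lam" by auto
  have gam_iff: "x \<in> Gam \<longleftrightarrow> x^(q-1) \<in> Lam" if "x \<noteq> 0" for x
  proof -
    have e0: "(x^m)^(q+1) = x^(m*(q+1))" by (rule power_mult[symmetric])
    have "m*(q+1) = m*(m+2)" using qm by simp
    hence e1: "(x^m)^(q+1) = x^(m*(m+2))" using e0 by simp
    have "x^(q^2) + x^q + x = x * ((x^(q-1))^(q+1) + x^(q-1) + 1)"
    proof -
      have "q^2 = Suc (m*(m+2))" using qm by (simp add: power2_eq_square algebra_simps)
      thus ?thesis using qm e1 by (simp add: algebra_simps)
    qed
    thus ?thesis using that by (simp add: Gam_def Lam_def Gamma_set_def Lambda_set_def)
  qed
  have zG: "0 \<in> Gam" using q2 by (simp add: Gam_def Gamma_set_def zero_power)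
  have zL: "0 \<notin> Lam" using q2 by (simp add: Lam_def Lambda_set_def zero_power)
  have Lpow: "y^(q^2+q+1) = 1" if "y \<in> Lam" for y
  proof -
    have y: "y^(q+1) = -y - 1" using that by (simp add: Lam_def Lambda_set_def eq_neg_iff_add_eq_0 algebra_simps)
    have "(y^(q+1))^q = (-y-1)^q" using y by simp
    also have "\<dots> = -(y^q) - 1" using frob_diff[OF pc qk, of "-y" 1] frob_neg[OF pc qk, of y] by simp
    finally have yq0: "(y^(q+1))^q = -(y^q) - 1" .
    have "(y^(q+1))^q = y^((q+1)*q)" by (rule power_mult[symmetric])
    also have "(q+1)*q = q^2+q" by (simp add: power2_eq_square)
    finally have yq: "y^(q^2+q) = -(y^q) - 1" using yq0 by simp
    have "y^(q^2+q+1) = y^(q^2+q) * y" by simp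
    also have "\<dots> = (-(y^q) - 1) * y" using yq by (simp only:)
    also have "\<dots> = -(y^(q+1)) - y" by (simp add: algebra_simps)
    also have "\<dots> = 1" using y by simp
    finally show ?thesis .
  qed
  have lam_root: "\<exists>x. x \<noteq> 0 \<and> x^(q-1) = y" if "y \<in> Lam" for y
  proof -
    have "card {x::'a. x^(q-1) = y} = q - 1"
      using pow_eq_count[OF _ Nfac Lpow[OF that] card2] q2 by simp
    hence "{x::'a. x^(q-1) = y} \<noteq> {}" using q2 by (intro notI) simp
    then obtain x where x: "x^(q-1) = y" by auto
    moreover have "x \<noteq> 0" using x zL that q2 by (auto simp: zero_power)
    ultimately show ?thesis by blast
  qed
  have fg: "f x ^ (q-1) = g (x^(q-1))" for x
    by (simp add: f_def g_def power_mult_distrib flip: power_mult) (simp add: mult.commute)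
  have f_scale: "f (a*x) = a^r * f x" if "a^(q-1) = 1" for a x
    using that by (simp add: f_def power_mult_distrib)
  have f0: "f 0 = 0" using assms(3) by (simp add: f_def zero_power)
  have gam_nz: "\<exists>x\<in>Gam. x \<noteq> 0"
  proof -
    define T where "T = (\<lambda>x::'a. x^(q^2) + x^q + x)"
    have xq3: "x^(q^3) = x" for x :: 'a
    proof (cases "x = 0")
      case True thus ?thesis using q2 by (simp add: zero_power)
    next
      case False
      have "q^3 = Suc (q^3 - 1)" using q2 by simp
      hence "x^(q^3) = x^(q^3 - 1) * x" by (metis power_Suc2)
      thus ?thesis using fermat_field[OF False] assms(2) by simp
    qed
    have pq2: "(x^(q^2))^q = x^(q^3)" "(x^q)^q = x^(q^2)" for x :: 'a
      by (simp_all add: power2_eq_square power3_eq_cube flip: power_mult)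
    have Tq: "T x ^ q = T x" for x
    proof -
      have "T x ^ q = (x^(q^2))^q + (x^q)^q + x^q"
        unfolding T_def by (simp only: frob_add[OF pc qk])
      also have "\<dots> = x^(q^3) + x^(q^2) + x^q" by (simp only: pq2)
      also have "\<dots> = T x" by (simp add: xq3 T_def algebra_simps)
      finally show ?thesis .
    qed
    have Tdiff: "T (x - y) = T x - T y" for x y
    proof -
      have "(x - y)^(q^2) = ((x-y)^q)^q" by (simp add: power2_eq_square power_mult)
      also have "\<dots> = (x^q)^q - (y^q)^q" using frob_diff[OF pc qk] by simp
      also have "\<dots> = x^(q^2) - y^(q^2)" by (simp add: power2_eq_square power_mult)
      finally have "(x - y)^(q^2) = x^(q^2) - y^(q^2)" .
      thus ?thesis using frob_diff[OF pc qk] by (simp add: T_def algebra_simps)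
    qed
    have "\<not> inj T"
    proof
      assume inj: "inj T"
      have "T ` UNIV \<subseteq> {z. poly ([:0,1::'a:]^q - [:0,1:]) z = 0}"
        using Tq by (auto simp: poly_power)
      moreover have "degree ([:0,1::'a:]^q - [:0,1:]) = q"
      proof -
        have "[:0,1::'a:]^q - [:0,1:] = [:0,1::'a:]^q + [:0,-1:]" by simp
        also have "degree \<dots> = degree ([:0,1::'a:]^q)"
          using q2 by (intro degree_add_eq_left) (simp add: degree_linear_power[of 0, simplified])
        finally have "degree ([:0,1::'a:]^q - [:0,1:]) = degree ([:0,1::'a:]^q)" .
        thus ?thesis using degree_linear_power[of "0::'a" q] by simp
      qed
      moreover have "[:0,1::'a:]^q - [:0,1:] \<noteq> 0"
        using \<open>degree ([:0,1::'a:]^q - [:0,1:]) = q\<close> q2 by (intro notI) simp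
      ultimately have "card (T ` UNIV) \<le> q"
        using card_poly_roots_bound[of "[:0,1::'a:]^q - [:0,1:]"] card_mono[of _ "T ` UNIV"]
        by (metis finite le_trans)
      moreover have "card (T ` UNIV) = q^3" using inj assms(2) by (simp add: card_image)
      moreover have "q < q^3"
      proof -
        have "2*2 \<le> q*q" by (rule mult_le_mono[OF q2 q2])
        hence "q * 1 < q * (q*q)" using q2 by (intro mult_strict_left_mono) auto
        thus ?thesis by (simp add: power3_eq_cube)
      qed
      ultimately show False by simp
    qed
    then obtain x y where "x \<noteq> y" "T x = T y" unfolding inj_def by blast
    hence "x - y \<noteq> 0" "T (x - y) = 0" using Tdiff by auto
    thus ?thesis by (auto simp: Gam_def Gamma_set_def T_def)
  qed
  have unity: "\<exists>a::'a. a \<noteq> 1 \<and> a^r = 1 \<and> a^(q-1) = 1" if "gcd r (q-1) \<noteq> 1"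
  proof -
    define d where "d = gcd r (q-1)"
    have d0: "d > 0" using assms(3) by (simp add: d_def)
    have dd: "d dvd card (UNIV::'a set) - 1" using Nfac by (metis d_def dvd_mult2 gcd_dvd2)
    then obtain e where "card (UNIV::'a set) - 1 = d * e" by (rule dvdE)
    hence "d * e = card (UNIV::'a set) - 1" by simp
    hence c: "card {x::'a. x^d = 1} = d" using pow_eq_count[OF d0 _ _ card2] by simp
    have "d \<ge> 2" using that d0 d_def by linarith
    have "\<not> {x::'a. x^d = 1} \<subseteq> {1}"
    proof
      assume "{x::'a. x^d = 1} \<subseteq> {1}"
      hence "card {x::'a. x^d = 1} \<le> card {1::'a}" by (intro card_mono) auto
      thus False using c \<open>d \<ge> 2\<close> by simp
    qed
    then obtain a :: 'a where a: "a^d = 1" "a \<noteq> 1" by auto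
    have "d dvd r" "d dvd q - 1" by (simp_all add: d_def)
    then obtain s t where "r = d * s" "q - 1 = d * t" by (auto elim!: dvdE)
    hence "a^r = 1" "a^(q-1) = 1" using a by (simp_all add: power_mult)
    thus ?thesis using a by blast
  qed
  have partA: "bij_betw f Gam Gam \<longleftrightarrow> (gcd r (q-1) = 1 \<and> bij_betw g Lam Lam)"
  proof
    assume bf: "bij_betw f Gam Gam"
    hence injf: "inj_on f Gam" and imf: "f ` Gam = Gam" by (auto simp: bij_betw_def)
    have fnz: "f x \<noteq> 0" if "x \<in> Gam" "x \<noteq> 0" for x
      using injf that zG f0 by (metis inj_onD)
    have gcd1: "gcd r (q-1) = 1"
    proof (rule ccontr)
      assume "gcd r (q-1) \<noteq> 1"
      then obtain a :: 'a where a: "a \<noteq> 1" "a^r = 1" "a^(q-1) = 1" using unity by blast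
      obtain x where x: "x \<in> Gam" "x \<noteq> 0" using gam_nz by blast
      have a0: "a \<noteq> 0" using a q2 by (auto simp: zero_power)
      have "(a*x)^(q-1) = x^(q-1)" using a by (simp add: power_mult_distrib)
      hence "a*x \<in> Gam" using x gam_iff a0 by simp
      moreover have "f (a*x) = f x" using f_scale a by simp
      ultimately have "a*x = x" using injf x by (meson inj_onD)
      thus False using a x by simp
    qed
    have "g ` Lam = Lam"
    proof
      show "g ` Lam \<subseteq> Lam"
      proof
        fix z assume "z \<in> g ` Lam"
        then obtain y where y: "y \<in> Lam" "z = g y" by auto
        obtain x where x: "x \<noteq> 0" "x^(q-1) = y" using lam_root y by blast
        have xG: "x \<in> Gam" using gam_iff x y by simp
        have "f x \<in> Gam" "f x \<noteq> 0" using imf xG fnz x by auto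
        hence "f x ^ (q-1) \<in> Lam" using gam_iff by simp
        thus "z \<in> Lam" using fg x y by simp
      qed
      show "Lam \<subseteq> g ` Lam"
      proof
        fix y assume y: "y \<in> Lam"
        obtain x where x: "x \<noteq> 0" "x^(q-1) = y" using lam_root y by blast
        have xG: "x \<in> Gam" using gam_iff x y by simp
        then obtain x' where x': "x' \<in> Gam" "x = f x'" using imf by auto
        have "x' \<noteq> 0" using x x' f0 by auto
        hence "x'^(q-1) \<in> Lam" using gam_iff x' by simp
        moreover have "g (x'^(q-1)) = y" using fg x x' by metis
        ultimately show "y \<in> g ` Lam" by blast
      qed
    qed
    hence "bij_betw g Lam Lam" using finL by (simp add: bij_betw_def eq_card_imp_inj_on)
    thus "gcd r (q-1) = 1 \<and> bij_betw g Lam Lam" using gcd1 by simp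
  next
    assume "gcd r (q-1) = 1 \<and> bij_betw g Lam Lam"
    hence gcd1: "gcd r (q-1) = 1" and injg: "inj_on g Lam" and img: "g ` Lam = Lam"
      by (auto simp: bij_betw_def)
    have fnz: "f x \<noteq> 0 \<and> f x \<in> Gam" if "x \<in> Gam" "x \<noteq> 0" for x
    proof -
      have "g (x^(q-1)) \<in> Lam" using img gam_iff that by blast
      hence fl: "f x ^ (q-1) \<in> Lam" using fg by simp
      hence "f x \<noteq> 0" using zL q2 by (auto simp: zero_power)
      thus ?thesis using fl gam_iff by simp
    qed
    have sub: "f ` Gam \<subseteq> Gam"
    proof
      fix z assume "z \<in> f ` Gam"
      then obtain x where x: "x \<in> Gam" "z = f x" by auto
      show "z \<in> Gam" using fnz[OF x(1)] x zG f0 by (cases "x = 0") auto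
    qed
    have injf: "inj_on f Gam"
    proof (rule inj_onI)
      fix x1 x2 assume x: "x1 \<in> Gam" "x2 \<in> Gam" "f x1 = f x2"
      show "x1 = x2"
      proof (cases "x1 = 0 \<or> x2 = 0")
        case True
        thus ?thesis using x fnz f0 by metis
      next
        case False
        hence nz: "x1 \<noteq> 0" "x2 \<noteq> 0" by auto
        have "g (x1^(q-1)) = g (x2^(q-1))" using fg x(3) by metis
        moreover have "x1^(q-1) \<in> Lam" "x2^(q-1) \<in> Lam" using gam_iff nz x by auto
        ultimately have e: "x1^(q-1) = x2^(q-1)" using injg by (meson inj_onD)
        define a where "a = x2 / x1"
        have a1: "a^(q-1) = 1" using e nz by (simp add: a_def power_divide)
        have x2a: "x2 = a * x1" using nz by (simp add: a_def)
        have "f x1 = a^r * f x1" using f_scale[OF a1, of x1] x2a x(3) by simp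
        hence "a^r = 1" using fnz[OF x(1) nz(1)] by simp
        hence "a = 1" using coprime_pow_one[OF gcd1 assms(3) _ a1] by simp
        thus ?thesis using x2a by simp
      qed
    qed
    have "f ` Gam = Gam" using endo_inj_surj[OF finG sub injf] .
    thus "bij_betw f Gam Gam" using injf by (simp add: bij_betw_def)
  qed
  have key: "g y = h y" if "y \<in> Lam" "poly B y \<noteq> 0" for y
  proof -
    have y0: "y \<noteq> 0" using that zL by auto
    have y1: "y^(q+1) + y + 1 = 0" using that(1) by (simp add: Lam_def Lambda_set_def)
    have "y^q * y = (y^(q+1) + y + 1) - y - 1" by (simp add: algebra_simps)
    also have "\<dots> = -y - 1" using y1 by simp
    finally have y: "y^q * y = -y - 1" .
    have "y^q = (y^q * y) / y" using y0 by simp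
    also have "\<dots> = (-y-1)/y" using y by simp
    also have "\<dots> = - inverse y - 1" using y0 by (simp add: field_simps)
    finally have yq: "y^q = - inverse y - 1" .
    have "poly B y ^ q = poly (frob_coeffs q B) (- inverse y - 1)"
      using frob_poly[OF pc qk, of B y] yq by simp
    moreover have "poly B y ^ q = poly B y ^ (q-1) * poly B y"
      using qm by (simp add: power_Suc2)
    ultimately have eq: "poly (frob_coeffs q B) (- inverse y - 1) = poly B y ^ (q-1) * poly B y"
      by simp
    have "h y = y^r * (poly B y ^ (q-1) * poly B y) / poly B y" by (simp add: h_def eq)
    also have "\<dots> = (y^r * poly B y ^ (q-1)) * poly B y / poly B y" by (simp only: mult.assoc)
    also have "\<dots> = g y" using that(2) by (simp add: g_def)
    finally show ?thesis by simp
  qed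
  have partB: "(gcd r (q-1) = 1 \<and> bij_betw g Lam Lam) \<longleftrightarrow>
      (gcd r (q-1) = 1 \<and> (\<forall>x\<in>Lam. poly B x \<noteq> 0) \<and> bij_betw h Lam Lam)"
  proof
    assume a: "gcd r (q-1) = 1 \<and> bij_betw g Lam Lam"
    have nz: "\<forall>x\<in>Lam. poly B x \<noteq> 0"
    proof
      fix x assume x: "x \<in> Lam"
      have "g x \<in> Lam" using a x by (auto simp: bij_betw_def)
      hence "g x \<noteq> 0" using zL by auto
      thus "poly B x \<noteq> 0" using q2 by (auto simp: g_def zero_power)
    qed
    have "bij_betw h Lam Lam" using a key nz bij_betw_cong[of Lam g h Lam] by auto
    thus "gcd r (q-1) = 1 \<and> (\<forall>x\<in>Lam. poly B x \<noteq> 0) \<and> bij_betw h Lam Lam" using a nz by simp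
  next
    assume a: "gcd r (q-1) = 1 \<and> (\<forall>x\<in>Lam. poly B x \<noteq> 0) \<and> bij_betw h Lam Lam"
    hence "bij_betw g Lam Lam" using key bij_betw_cong[of Lam g h Lam] by auto
    thus "gcd r (q-1) = 1 \<and> bij_betw g Lam Lam" using a by simp
  qed
  show ?thesis using partA partB unfolding f_def g_def h_def Gam_def Lam_def by blast
qed

end
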